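(* Let $Q,M,B\in\mathbb{R}^{n\times n}$ be symmetric positive semidefinite, and let $\Pi\in\mathbb{R}^{n\times n}$ satisfy $Q-\Pi M^\dagger\Pi^\top\succeq0$ and $\Pi^\top=MM^\dagger\Pi^\top$. Then for all matrices $R,G\in\mathbb{R}^{n\times n}$, $$\operatorname{tr}\{QRR^\top+BMBGG^\top\}\ \ge\ 2\operatorname{tr}\{\Pi BGR^\top\}.$$
   Context: $M^\dagger$ denotes the Moore–Penrose pseudoinverse of $M$. *)

theory Defs
  imports "HOL-Analysis.Analysis"
begin

definition mtrace :: "real^'n^'n \<Rightarrow> real" where
  "mtrace A = (\<Sum>i\<in>UNIV. A $ i $ i)"

definition msym :: "real^'n^'n \<Rightarrow> bool" where
  "msym A \<longleftrightarrow> transpose A = A"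

definition psd :: "real^'n^'n \<Rightarrow> bool" where
  "psd A \<longleftrightarrow> msym A \<and> (\<forall>x. 0 \<le> x \<bullet> (A *v x))"

definition is_pinv :: "real^'n^'m \<Rightarrow> real^'m^'n \<Rightarrow> bool" where
  "is_pinv A X \<longleftrightarrow> A ** X ** A = A \<and> X ** A ** X = X \<and>
     transpose (A ** X) = A ** X \<and> transpose (X ** A) = X ** A"

(* Moore-Penrose pseudoinverse (exists and is unique) *)
definition pinv :: "real^'n^'m \<Rightarrow> real^'m^'n" where
  "pinv A = (THE X. is_pinv A X)"

end

theory Submission
  imports Defs
begin

lemma mtrace_eq: "mtrace A = trace A"
  by (simp add: mtrace_def trace_def)

lemma trace_transpose: "trace (transpose (A::real^'n^'n)) = trace A"
  by (simp add: trace_def transpose_def)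

lemma transpose_diff: "transpose ((A::real^'n^'m) - B) = transpose A - transpose B"
  by (simp add: transpose_def vec_eq_iff)

lemma mm_diff_l: "(A::real^'n^'m) ** ((B::real^'p^'n) - C) = A ** B - A ** C"
  by (simp add: matrix_matrix_mult_def vec_eq_iff sum_subtractf algebra_simps)

lemma mm_diff_r: "((A::real^'n^'m) - B) ** (C::real^'p^'n) = A ** C - B ** C"
  by (simp add: matrix_matrix_mult_def vec_eq_iff sum_subtractf algebra_simps)

lemma trace_psd:
  assumes "psd (A::real^'n^'n)"
  shows "0 \<le> trace (transpose R ** A ** R)"
proof -
  have sw: "(\<Sum>k\<in>UNIV. \<Sum>n\<in>UNIV. R$k$i*(R$n$i*A$n$k)) = (\<Sum>k\<in>UNIV. \<Sum>n\<in>UNIV. R$k$i*(R$n$i*A$k$n))" for i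
    by (subst sum.swap) (simp add: mult_ac)
  have "trace (transpose R ** A ** R) = (\<Sum>j\<in>UNIV. column j R \<bullet> (A *v column j R))"
    by (simp add: trace_def matrix_matrix_mult_def transpose_def column_def inner_vec_def
        matrix_vector_mult_def sum_distrib_left sum_distrib_right mult_ac)
      (simp add: sw)
  also have "\<dots> \<ge> 0" using assms unfolding psd_def by (simp add: sum_nonneg)
  finally show ?thesis .
qed

theorem lemma2:
  fixes Q M B P R G :: "real^'n^'n"
  assumes "psd Q" and "psd M" and "psd B"
    and "psd (Q - P ** pinv M ** transpose P)"
    and "transpose P = M ** pinv M ** transpose P"
  shows "mtrace (Q ** R ** transpose R + B ** M ** B ** G ** transpose G)
           \<ge> 2 * mtrace (P ** B ** G ** transpose R)"
proof -
  define X where "X = pinv M"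
  define U where "U = X ** transpose P ** R"
  define V where "V = B ** G"
  have MT: "transpose M = M" and BT: "transpose B = B"
    using assms(2,3) by (auto simp: psd_def msym_def)
  have PT: "transpose P = M ** X ** transpose P" using assms(5) by (simp add: X_def)
  have P2: "P = P ** transpose X ** M"
  proof -
    have "P = transpose (transpose P)" by simp
    also have "\<dots> = transpose (M ** X ** transpose P)" using PT by simp
    also have "\<dots> = P ** transpose X ** M"
      by (simp add: matrix_transpose_mul MT matrix_mul_assoc)
    finally show ?thesis .
  qed
  have h1: "0 \<le> trace (transpose R ** (Q - P ** X ** transpose P) ** R)"
    using trace_psd assms(4) X_def by blast
  have e1: "trace (transpose R ** (Q - P ** X ** transpose P) ** R)
     = trace (Q ** R ** transpose R) - trace (P ** X ** transpose P ** R ** transpose R)"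
  proof -
    have "trace (transpose R ** (Q - P ** X ** transpose P) ** R)
        = trace (transpose R ** ((Q - P ** X ** transpose P) ** R))"
      by (simp add: matrix_mul_assoc)
    also have "\<dots> = trace ((Q - P ** X ** transpose P) ** R ** transpose R)"
      by (rule trace_mul_sym)
    also have "\<dots> = trace (Q ** R ** transpose R) - trace (P ** X ** transpose P ** R ** transpose R)"
      by (simp add: mm_diff_r trace_sub)
    finally show ?thesis .
  qed
  define D where "D = U - V"
  have h2: "0 \<le> trace (transpose D ** M ** D)" using trace_psd assms(2) by blast
  have e2: "transpose D ** M ** D = transpose U ** M ** U - transpose U ** M ** V
      - (transpose V ** M ** U - transpose V ** M ** V)"
    by (simp add: D_def transpose_diff mm_diff_l mm_diff_r matrix_mul_assoc)
  have tUU: "trace (transpose U ** M ** U) = trace (P ** X ** transpose P ** R ** transpose R)"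
  proof -
    have "transpose U ** M ** U = transpose R ** P ** transpose X ** (M ** X ** transpose P) ** R"
      by (simp add: U_def matrix_transpose_mul matrix_mul_assoc)
    also have "\<dots> = transpose R ** P ** transpose X ** transpose P ** R"
      by (simp only: PT[symmetric])
    also have "\<dots> = transpose (transpose R ** P ** X ** transpose P ** R)"
      by (simp add: matrix_transpose_mul matrix_mul_assoc)
    finally have "trace (transpose U ** M ** U) = trace (transpose R ** (P ** X ** transpose P ** R))"
      by (simp add: trace_transpose matrix_mul_assoc)
    also have "\<dots> = trace (P ** X ** transpose P ** R ** transpose R)"
      by (rule trace_mul_sym)
    finally show ?thesis .
  qed
  have tVV: "trace (transpose V ** M ** V) = trace (B ** M ** B ** G ** transpose G)"
  proof -
    have "trace (transpose V ** M ** V) = trace (transpose G ** (B ** M ** B ** G))"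
      by (simp add: V_def matrix_transpose_mul BT matrix_mul_assoc)
    also have "\<dots> = trace (B ** M ** B ** G ** transpose G)"
      by (rule trace_mul_sym)
    finally show ?thesis .
  qed
  have tVU: "trace (transpose V ** M ** U) = trace (transpose U ** M ** V)"
  proof -
    have "transpose V ** M ** U = transpose (transpose U ** M ** V)"
      by (simp add: matrix_transpose_mul MT matrix_mul_assoc)
    then show ?thesis by (simp add: trace_transpose)
  qed
  have tUV: "trace (transpose U ** M ** V) = trace (P ** B ** G ** transpose R)"
  proof -
    have "transpose U ** M ** V = transpose R ** (P ** transpose X ** M) ** B ** G"
      by (simp add: U_def V_def matrix_transpose_mul matrix_mul_assoc)
    also have "\<dots> = transpose R ** P ** B ** G" by (simp only: P2[symmetric])
    finally have "trace (transpose U ** M ** V) = trace (transpose R ** (P ** B ** G))"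
      by (simp add: matrix_mul_assoc)
    also have "\<dots> = trace (P ** B ** G ** transpose R)"
      by (rule trace_mul_sym)
    finally show ?thesis .
  qed
  have "trace (transpose D ** M ** D) = trace (P ** X ** transpose P ** R ** transpose R)
      - 2 * trace (P ** B ** G ** transpose R) + trace (B ** M ** B ** G ** transpose G)"
    using tUU tVV tVU tUV by (simp add: e2 trace_sub)
  then show ?thesis using h1 h2 e1
    by (simp add: mtrace_eq trace_add)
qed

end
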